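(* Let $\pi$ be a prior density on $\mathbb{R}^d$ and let $M^{\pi}(x)=\int_{\mathbb{R}^d}p_{A,\nu,\gamma}(x\mid\theta)\pi(\theta)\,d\theta$ be the corresponding marginal density. Then \[ B_{\mathsf{KL}}(\pi,\hat p^{\pi_U})-B_{\mathsf{KL}}(\pi,\hat p^{\pi})=\int_{\mathbb{R}^d}\mathsf{KL}\big(\hat p^{\pi}(\cdot\mid x)\,\big\|\,\hat p^{\pi_U}(\cdot\mid x)\big)\,M^{\pi}(x)\,dx, \] and $M^{\pi}$ is an invariant distribution of $\hat p^{\pi}$ in the sense that \[ \int_{\mathbb{R}^d}\hat p^{\pi}(y\mid x)\,M^{\pi}(y)\,dy=M^{\pi}(x)\quad\text{for all }x. \]
   Context: Fix $d\ge 1$ and a known Lévy–Khintchine triplet $(A,\nu,\gamma)$ on $\mathbb{R}^d$ ($A$ the Gaussian covariance matrix, $\nu$ the Lévy measure, $\gamma$ the center). Consider the location model $X=\theta+\varepsilon$, $\varepsilon\sim\mathrm{ID}(A,\nu,\gamma)$ (the infinitely divisible law with this triplet), with unknown $\theta\in\mathbb{R}^d$, and write $p_{A,\nu,\gamma}(x\mid\theta)$ for the density of $X$; a future observation $Y$ has density $p_{A,\nu,\gamma}(y\mid\theta)$. For a predictive density $\hat p(\cdot\mid x)$, the KL loss is $L_{\mathsf{KL}}(\theta,\hat p(\cdot\mid x))=\int\log\frac{p_{A,\nu,\gamma}(y\mid\theta)}{\hat p(y\mid x)}p_{A,\nu,\gamma}(y\mid\theta)\,dy$, the risk is $R_{\mathsf{KL}}(\theta,\hat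 p)=\int L_{\mathsf{KL}}(\theta,\hat p(\cdot\mid x))p_{A,\nu,\gamma}(x\mid\theta)\,dx$, and the Bayes risk under prior $\pi$ is $B_{\mathsf{KL}}(\pi,\hat p)=\int R_{\mathsf{KL}}(\theta,\hat p)\pi(\theta)\,d\theta$. The Bayes predictive density under a (possibly improper) prior $\pi$ is $\hat p^{\pi}(y\mid x)=\int p_{A,\nu,\gamma}(y\mid\theta)\pi(\theta\mid x)\,d\theta=\frac{1}{M^{\pi}(x)}\int p_{A,\nu,\gamma}(y\mid\theta)p_{A,\nu,\gamma}(x\mid\theta)\pi(\theta)\,d\theta$. $\pi_U\equiv 1$ denotes the (improper) uniform prior, so $\hat p^{\pi_U}(y\mid x)=\int p_{A,\nu,\gamma}(y\mid\theta)p_{A,\nu,\gamma}(x\mid\theta)\,d\theta$. *)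

theory Defs
  imports "HOL-Probability.Probability"
begin

text \<open>R^d is modelled by an arbitrary Euclidean space 'a (dimension DIM('a) \<ge> 1).\<close>

definition levy_measure :: "'a::euclidean_space measure \<Rightarrow> bool" where
  "levy_measure \<nu> \<longleftrightarrow> sets \<nu> = sets borel \<and> emeasure \<nu> {0} = 0 \<and>
     (\<integral>\<^sup>+ x. ennreal (min 1 ((norm x)\<^sup>2)) \<partial>\<nu>) < \<infinity>"

definition covariance_op :: "('a::euclidean_space \<Rightarrow> 'a) \<Rightarrow> bool" where
  "covariance_op A \<longleftrightarrow> linear A \<and> (\<forall>x y. A x \<bullet> y = x \<bullet> A y) \<and> (\<forall>x. 0 \<le> x \<bullet> A x)"

definition levy_triplet :: "('a::euclidean_space \<Rightarrow> 'a) \<Rightarrow> 'a measure \<Rightarrow> 'a \<Rightarrow> bool" where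
  "levy_triplet A \<nu> \<gamma> \<longleftrightarrow> covariance_op A \<and> levy_measure \<nu>"

definition levy_exponent :: "('a::euclidean_space \<Rightarrow> 'a) \<Rightarrow> 'a measure \<Rightarrow> 'a \<Rightarrow> 'a \<Rightarrow> complex" where
  "levy_exponent A \<nu> \<gamma> u =
     \<i> * complex_of_real (\<gamma> \<bullet> u) - complex_of_real ((u \<bullet> A u) / 2) +
     (CLINT x|\<nu>. exp (\<i> * complex_of_real (u \<bullet> x)) - 1
                  - \<i> * complex_of_real ((u \<bullet> x) * indicator (cball 0 1) x))"

definition ID_density :: "('a::euclidean_space \<Rightarrow> 'a) \<Rightarrow> 'a measure \<Rightarrow> 'a \<Rightarrow> ('a \<Rightarrow> real) \<Rightarrow> bool" where
  "ID_density A \<nu> \<gamma> f \<longleftrightarrow> levy_triplet A \<nu> \<gamma> \<and>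
     f \<in> borel_measurable lborel \<and> (\<forall>x. 0 \<le> f x) \<and>
     prob_space (density lborel (\<lambda>x. ennreal (f x))) \<and>
     (\<forall>u. (CLINT x|lborel. complex_of_real (f x) * exp (\<i> * complex_of_real (u \<bullet> x)))
            = exp (levy_exponent A \<nu> \<gamma> u))"

text \<open>Location model: density of X = theta + eps at x.\<close>
definition loc_dens :: "('a::euclidean_space \<Rightarrow> real) \<Rightarrow> 'a \<Rightarrow> 'a \<Rightarrow> real" where
  "loc_dens f x \<theta> = f (x - \<theta>)"

definition marginal :: "('a::euclidean_space \<Rightarrow> real) \<Rightarrow> ('a \<Rightarrow> real) \<Rightarrow> 'a \<Rightarrow> real" where
  "marginal f \<pi> x = (\<integral>\<theta>. loc_dens f x \<theta> * \<pi> \<theta> \<partial>lborel)"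

text \<open>Predictive densities are functions x \<mapsto> (y \<mapsto> density at y given x).\<close>
definition bayes_pred :: "('a::euclidean_space \<Rightarrow> real) \<Rightarrow> ('a \<Rightarrow> real) \<Rightarrow> 'a \<Rightarrow> 'a \<Rightarrow> real" where
  "bayes_pred f \<pi> x y =
     (\<integral>\<theta>. loc_dens f y \<theta> * loc_dens f x \<theta> * \<pi> \<theta> \<partial>lborel) / marginal f \<pi> x"

definition unif_pred :: "('a::euclidean_space \<Rightarrow> real) \<Rightarrow> 'a \<Rightarrow> 'a \<Rightarrow> real" where
  "unif_pred f x y = (\<integral>\<theta>. loc_dens f y \<theta> * loc_dens f x \<theta> \<partial>lborel)"

definition KL_div :: "('a::euclidean_space \<Rightarrow> real) \<Rightarrow> ('a \<Rightarrow> real) \<Rightarrow> real" where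
  "KL_div p q = (\<integral>y. ln (p y / q y) * p y \<partial>lborel)"

definition KL_loss :: "('a::euclidean_space \<Rightarrow> real) \<Rightarrow> 'a \<Rightarrow> ('a \<Rightarrow> real) \<Rightarrow> real" where
  "KL_loss f \<theta> q = KL_div (\<lambda>y. loc_dens f y \<theta>) q"

definition KL_risk :: "('a::euclidean_space \<Rightarrow> real) \<Rightarrow> 'a \<Rightarrow> ('a \<Rightarrow> 'a \<Rightarrow> real) \<Rightarrow> real" where
  "KL_risk f \<theta> P = (\<integral>x. KL_loss f \<theta> (P x) * loc_dens f x \<theta> \<partial>lborel)"

definition bayes_risk :: "('a::euclidean_space \<Rightarrow> real) \<Rightarrow> ('a \<Rightarrow> real) \<Rightarrow> ('a \<Rightarrow> 'a \<Rightarrow> real) \<Rightarrow> real" where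
  "bayes_risk f \<pi> P = (\<integral>\<theta>. KL_risk f \<theta> P * \<pi> \<theta> \<partial>lborel)"

text \<open>Finiteness of the Bayes risk: the full integrand in (x,y,theta) is absolutely integrable.\<close>
definition finite_bayes_risk :: "('a::euclidean_space \<Rightarrow> real) \<Rightarrow> ('a \<Rightarrow> real) \<Rightarrow> ('a \<Rightarrow> 'a \<Rightarrow> real) \<Rightarrow> bool" where
  "finite_bayes_risk f \<pi> P \<longleftrightarrow>
     integrable (lborel \<Otimes>\<^sub>M lborel \<Otimes>\<^sub>M lborel)
       (\<lambda>(x, y, \<theta>). ln (loc_dens f y \<theta> / P x y) * loc_dens f y \<theta> * loc_dens f x \<theta> * \<pi> \<theta>)"

end

theory Submission
  imports Defs
begin

abbreviation M3 :: "('a::euclidean_space \<times> 'a \<times> 'a) measure" where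
  "M3 \<equiv> lborel \<Otimes>\<^sub>M lborel \<Otimes>\<^sub>M lborel"

lemma nn_M3_iter:
  fixes g :: "'a::euclidean_space \<times> 'a \<times> 'a \<Rightarrow> ennreal"
  assumes [measurable]: "g \<in> borel_measurable M3"
  shows "integral\<^sup>N M3 g = (\<integral>\<^sup>+x. \<integral>\<^sup>+y. \<integral>\<^sup>+z. g (x,y,z) \<partial>lborel \<partial>lborel \<partial>lborel)"
proof -
  have "integral\<^sup>N M3 g = (\<integral>\<^sup>+x. \<integral>\<^sup>+p. g (x,p) \<partial>(lborel \<Otimes>\<^sub>M lborel) \<partial>lborel)"
    by (rule lborel_pair.nn_integral_fst[symmetric]) simp
  also have "\<dots> = (\<integral>\<^sup>+x. \<integral>\<^sup>+y. \<integral>\<^sup>+z. g (x,y,z) \<partial>lborel \<partial>lborel \<partial>lborel)"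
  proof (rule nn_integral_cong)
    fix x :: 'a
    show "(\<integral>\<^sup>+p. g (x,p) \<partial>(lborel \<Otimes>\<^sub>M lborel)) = (\<integral>\<^sup>+y. \<integral>\<^sup>+z. g (x,y,z) \<partial>lborel \<partial>lborel)"
      by (rule lborel.nn_integral_fst[symmetric, where f="\<lambda>p. g (x,p)"]) measurable
  qed
  finally show ?thesis .
qed

lemma nn_M3_perm:
  fixes g :: "'a::euclidean_space \<times> 'a \<times> 'a \<Rightarrow> ennreal"
  assumes [measurable]: "g \<in> borel_measurable M3"
  shows "(\<integral>\<^sup>+p. g (case p of (z,x,y) \<Rightarrow> (x,y,z)) \<partial>M3) = integral\<^sup>N M3 g"
proof -
  have "(\<integral>\<^sup>+p. g (case p of (z,x,y) \<Rightarrow> (x,y,z)) \<partial>M3) = (\<integral>\<^sup>+z. \<integral>\<^sup>+x. \<integral>\<^sup>+y. g (x,y,z) \<partial>lborel \<partial>lborel \<partial>lborel)"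
    by (subst nn_M3_iter) auto
  also have "\<dots> = (\<integral>\<^sup>+x. \<integral>\<^sup>+z. \<integral>\<^sup>+y. g (x,y,z) \<partial>lborel \<partial>lborel \<partial>lborel)"
    by (rule lborel_pair.Fubini[where f="\<lambda>(x,z). \<integral>\<^sup>+y. g (x,y,z) \<partial>lborel", simplified])
  also have "\<dots> = (\<integral>\<^sup>+x. \<integral>\<^sup>+y. \<integral>\<^sup>+z. g (x,y,z) \<partial>lborel \<partial>lborel \<partial>lborel)"
  proof (rule nn_integral_cong)
    fix x :: 'a
    show "(\<integral>\<^sup>+z. \<integral>\<^sup>+y. g (x,y,z) \<partial>lborel \<partial>lborel) = (\<integral>\<^sup>+y. \<integral>\<^sup>+z. g (x,y,z) \<partial>lborel \<partial>lborel)"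
    proof -
      have m: "(\<lambda>(y,z). g (x,y,z)) \<in> borel_measurable (lborel \<Otimes>\<^sub>M lborel)" by measurable
      from lborel_pair.Fubini[OF m] show ?thesis by simp
    qed
  qed
  also have "\<dots> = integral\<^sup>N M3 g" by (subst nn_M3_iter) auto
  finally show ?thesis .
qed

lemma M3_perm:
  "distr M3 M3 (\<lambda>(z,x,y). (x,y,z)) = (M3 :: ('a::euclidean_space \<times> 'a \<times> 'a) measure)"
proof (rule measure_eqI)
  show "sets (distr M3 M3 (\<lambda>(z,x,y). (x,y,z))) = sets (M3 :: ('a \<times> 'a \<times> 'a) measure)" by simp
  fix A assume "A \<in> sets (distr M3 M3 (\<lambda>(z,x,y). (x,y,z)) :: ('a \<times> 'a \<times> 'a) measure)"
  then have A[measurable]: "A \<in> sets (M3 :: ('a \<times> 'a \<times> 'a) measure)" by simp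
  have "emeasure (distr M3 M3 (\<lambda>(z,x,y). (x,y,z))) A = (\<integral>\<^sup>+p. indicator A p \<partial>distr M3 M3 (\<lambda>(z,x,y). (x,y,z)))"
    by (rule nn_integral_indicator[symmetric]) (use A in simp)
  also have "\<dots> = (\<integral>\<^sup>+p. indicator A (case p of (z,x,y) \<Rightarrow> (x,y,z)) \<partial>M3)"
    by (subst nn_integral_distr) auto
  also have "\<dots> = (\<integral>\<^sup>+p. indicator A p \<partial>M3)"
    by (rule nn_M3_perm) simp
  also have "\<dots> = emeasure M3 A" by (rule nn_integral_indicator) (use A in simp)
  finally show "emeasure (distr M3 M3 (\<lambda>(z,x,y). (x,y,z))) A = emeasure M3 A" .
qed

interpretation lborel3: pair_sigma_finite "lborel :: 'a::euclidean_space measure" "lborel \<Otimes>\<^sub>M (lborel :: 'a measure)"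
  by (intro pair_sigma_finite.intro lborel.sigma_finite_measure_axioms lborel_pair.sigma_finite_measure_axioms)

lemma M3_triple:
  fixes G :: "'a::euclidean_space \<times> 'a \<times> 'a \<Rightarrow> real"
  assumes G: "integrable M3 G"
  shows "integral\<^sup>L M3 G = (\<integral>x. \<integral>y. \<integral>z. G (x,y,z) \<partial>lborel \<partial>lborel \<partial>lborel)"
proof -
  have [measurable]: "G \<in> borel_measurable M3" using G by simp
  have "integral\<^sup>L M3 G = (\<integral>x. \<integral>p. G (x,p) \<partial>(lborel \<Otimes>\<^sub>M lborel) \<partial>lborel)"
    by (rule lborel3.integral_fst'[OF G, symmetric])
  also have "\<dots> = (\<integral>x. \<integral>y. \<integral>z. G (x,y,z) \<partial>lborel \<partial>lborel \<partial>lborel)"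
  proof (rule integral_cong_AE)
    show "(\<lambda>x. \<integral>p. G (x,p) \<partial>(lborel \<Otimes>\<^sub>M lborel)) \<in> borel_measurable lborel" by measurable
    show "(\<lambda>x. \<integral>y. \<integral>z. G (x,y,z) \<partial>lborel \<partial>lborel) \<in> borel_measurable lborel" by measurable
    show "AE x in lborel. (\<integral>p. G (x,p) \<partial>(lborel \<Otimes>\<^sub>M lborel)) = (\<integral>y. \<integral>z. G (x,y,z) \<partial>lborel \<partial>lborel)"
      using lborel3.AE_integrable_fst'[OF G]
    proof eventually_elim
      case (elim x)
      show ?case by (rule lborel_pair.integral_fst'[OF elim, symmetric, simplified])
    qed
  qed
  finally show ?thesis .
qed

lemma M3_perm_int:
  fixes G :: "'a::euclidean_space \<times> 'a \<times> 'a \<Rightarrow> real"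
  assumes G: "integrable M3 G"
  shows "integrable M3 (\<lambda>p. G (case p of (z,x,y) \<Rightarrow> (x,y,z)))"
    and "integral\<^sup>L M3 (\<lambda>p. G (case p of (z,x,y) \<Rightarrow> (x,y,z))) = integral\<^sup>L M3 G"
proof -
  have [measurable]: "G \<in> borel_measurable M3" using G by simp
  have m: "(\<lambda>(z,x,y). (x,y,z)) \<in> measurable M3 (M3 :: ('a \<times> 'a \<times> 'a) measure)" by measurable
  show "integrable M3 (\<lambda>p. G (case p of (z,x,y) \<Rightarrow> (x,y,z)))"
  proof -
    have "integrable (distr M3 M3 (\<lambda>(z,x,y). (x,y,z))) G" unfolding M3_perm by (rule G)
    then show ?thesis using integrable_distr_eq[OF m, of G] by (simp add: case_prod_beta)
  qed
  show "integral\<^sup>L M3 (\<lambda>p. G (case p of (z,x,y) \<Rightarrow> (x,y,z))) = integral\<^sup>L M3 G"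
    using integral_distr[OF m, of G] unfolding M3_perm by (simp add: case_prod_beta)
qed

lemma M3_iter_zxy:
  fixes G :: "'a::euclidean_space \<times> 'a \<times> 'a \<Rightarrow> real"
  assumes G: "integrable M3 G"
  shows "(\<integral>z. \<integral>x. \<integral>y. G (x,y,z) \<partial>lborel \<partial>lborel \<partial>lborel) = integral\<^sup>L M3 G"
  using M3_triple[OF M3_perm_int(1)[OF G]] M3_perm_int(2)[OF G] by simp

lemma ae_pos:
  fixes g k :: "'a::euclidean_space \<times> 'a \<times> 'a \<Rightarrow> real"
  assumes gm[measurable]: "g \<in> borel_measurable M3" and km[measurable]: "k \<in> borel_measurable M3"
    and g0: "\<And>p. 0 \<le> g p" and kg: "\<And>p. k p \<noteq> 0 \<Longrightarrow> 0 < g p"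
    and fin: "\<And>x. (\<integral>\<^sup>+y. \<integral>\<^sup>+z. ennreal (g (x,y,z)) \<partial>lborel \<partial>lborel) \<noteq> \<infinity>"
  shows "AE p in M3. k p \<noteq> 0 \<longrightarrow> 0 < (\<integral>z'. g (fst p, fst (snd p), z') \<partial>lborel)"
proof -
  let ?P = "\<lambda>p. k p \<noteq> 0 \<longrightarrow> 0 < (\<integral>z'. g (fst p, fst (snd p), z') \<partial>lborel)"
  have s3: "{p \<in> space M3. ?P p} \<in> sets M3" by measurable
  show ?thesis
  proof (rule lborel3.AE_pair_measure[OF s3])
    show "AE x in lborel. AE q in lborel \<Otimes>\<^sub>M lborel. ?P (x,q)"
    proof (rule AE_I2)
      fix x :: 'a
      have s2: "{q \<in> space (lborel \<Otimes>\<^sub>M lborel). ?P (x,q)} \<in> sets (lborel \<Otimes>\<^sub>M lborel)" by measurable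
      show "AE q in lborel \<Otimes>\<^sub>M lborel. ?P (x,q)"
      proof (rule lborel_pair.AE_pair_measure[OF s2])
        have "AE y in lborel. (\<integral>\<^sup>+z. ennreal (g (x,y,z)) \<partial>lborel) \<noteq> \<infinity>"
          by (rule nn_integral_PInf_AE) (measurable, rule fin)
        then show "AE y in lborel. AE z in lborel. ?P (x,(y,z))"
        proof eventually_elim
          case (elim y)
          show ?case
          proof (cases "(\<integral>\<^sup>+z. ennreal (g (x,y,z)) \<partial>lborel) = 0")
            case True
            then have "AE z in lborel. ennreal (g (x,y,z)) = 0"
              by (subst (asm) nn_integral_0_iff_AE) auto
            then show ?thesis
            proof eventually_elim
              case (elim z)
              then show ?case using kg[of "(x,y,z)"] g0[of "(x,y,z)"] by auto
            qed
          next
            case False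
            have "(\<integral>z'. g (x,y,z') \<partial>lborel) = enn2real (\<integral>\<^sup>+z. ennreal (g (x,y,z)) \<partial>lborel)"
              by (rule integral_eq_nn_integral) (auto simp add: g0)
            also have "\<dots> > 0" using False elim by (simp add: enn2real_positive_iff less_top[symmetric] zero_less_iff_neq_zero)
            finally show ?thesis by simp
          qed
        qed
      qed
    qed
  qed
qed

lemma nn_shift:
  fixes f :: "'a::euclidean_space \<Rightarrow> real"
  assumes [measurable]: "f \<in> borel_measurable borel"
  shows "(\<integral>\<^sup>+y. ennreal (f (y - t)) \<partial>lborel) = (\<integral>\<^sup>+y. ennreal (f y) \<partial>lborel)"
proof -
  have "(\<integral>\<^sup>+y. ennreal (f y) \<partial>lborel) = (\<integral>\<^sup>+y. ennreal (f y) \<partial>distr lborel borel ((+) (- t)))"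
    by (simp add: lborel_distr_plus)
  also have "\<dots> = (\<integral>\<^sup>+y. ennreal (f (- t + y)) \<partial>lborel)"
    by (subst nn_integral_distr) auto
  finally show ?thesis by (simp add: add.commute)
qed

lemma nn_refl:
  fixes f :: "'a::euclidean_space \<Rightarrow> real"
  assumes [measurable]: "f \<in> borel_measurable borel"
  shows "(\<integral>\<^sup>+y. ennreal (f (x - y)) \<partial>lborel) = (\<integral>\<^sup>+y. ennreal (f y) \<partial>lborel)"
proof -
  have e: "lborel = distr lborel borel (\<lambda>y. x + (-1::real) *\<^sub>R y)"
    using lborel_affine[of "-1::real" x] by (simp add: density_1)
  have "(\<integral>\<^sup>+y. ennreal (f y) \<partial>lborel) = (\<integral>\<^sup>+y. ennreal (f y) \<partial>distr lborel borel (\<lambda>y. x + (-1::real) *\<^sub>R y))"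
    by (subst e[symmetric]) simp
  also have "\<dots> = (\<integral>\<^sup>+y. ennreal (f (x + (-1::real) *\<^sub>R y)) \<partial>lborel)"
    by (subst nn_integral_distr) auto
  finally show ?thesis by simp
qed

lemma br_iter:
  "bayes_risk f \<pi> P = (\<integral>z. \<integral>x. \<integral>y. ln (loc_dens f y z / P x y) * loc_dens f y z * loc_dens f x z * \<pi> z \<partial>lborel \<partial>lborel \<partial>lborel)"
  unfolding bayes_risk_def KL_risk_def KL_loss_def KL_div_def by simp

theorem lemma1:
  fixes A :: "'a::euclidean_space \<Rightarrow> 'a" and \<nu> :: "'a measure" and \<gamma> :: 'a
    and f :: "'a \<Rightarrow> real" and \<pi> :: "'a \<Rightarrow> real"
  assumes "ID_density A \<nu> \<gamma> f"
    and "\<pi> \<in> borel_measurable lborel" and "\<And>\<theta>. 0 \<le> \<pi> \<theta>"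
    and "\<And>x. integrable lborel (\<lambda>\<theta>. loc_dens f x \<theta> * \<pi> \<theta>)"
    and "\<And>x. 0 < marginal f \<pi> x"
    and "finite_bayes_risk f \<pi> (unif_pred f)"
    and "finite_bayes_risk f \<pi> (bayes_pred f \<pi>)"
  shows "(bayes_risk f \<pi> (unif_pred f) - bayes_risk f \<pi> (bayes_pred f \<pi>)
           = (\<integral>x. KL_div (bayes_pred f \<pi> x) (unif_pred f x) * marginal f \<pi> x \<partial>lborel))
         \<and> (\<forall>x. (\<integral>y. bayes_pred f \<pi> y x * marginal f \<pi> y \<partial>lborel) = marginal f \<pi> x)"
proof -
  have fm[measurable]: "f \<in> borel_measurable borel" and f0: "\<And>x. 0 \<le> f x"
    and fps: "prob_space (density lborel (\<lambda>x. ennreal (f x)))"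
    using assms(1) unfolding ID_density_def by auto
  have pim[measurable]: "\<pi> \<in> borel_measurable borel" using assms(2) by simp
  have pi0: "\<And>t. 0 \<le> \<pi> t" by fact
  have f1: "(\<integral>\<^sup>+y. ennreal (f y) \<partial>lborel) = 1"
    using prob_space.emeasure_space_1[OF fps] by (simp add: emeasure_density)
  have T1: "\<And>t. (\<integral>\<^sup>+y. ennreal (f (y - t)) \<partial>lborel) = 1"
    using nn_shift[OF fm] f1 by simp
  have T2: "\<And>x. (\<integral>\<^sup>+t. ennreal (f (x - t)) \<partial>lborel) = 1"
    using nn_refl[OF fm] f1 by simp
  define M where "M = marginal f \<pi>"
  have Mpos: "\<And>x. 0 < M x" using assms(5) by (simp add: M_def)
  have Mx: "\<And>x. (\<integral>\<^sup>+t. ennreal (f (x - t) * \<pi> t) \<partial>lborel) = ennreal (M x)"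
    unfolding M_def marginal_def
    using nn_integral_eq_integral[OF assms(4)] by (simp add: loc_dens_def f0 pi0)
  have N1: "(\<integral>\<^sup>+y. \<integral>\<^sup>+t. ennreal (f (y - t) * f (x - t) * \<pi> t) \<partial>lborel \<partial>lborel) = ennreal (M x)" for x
  proof -
    have "(\<integral>\<^sup>+y. \<integral>\<^sup>+t. ennreal (f (y - t) * f (x - t) * \<pi> t) \<partial>lborel \<partial>lborel)
        = (\<integral>\<^sup>+t. \<integral>\<^sup>+y. ennreal (f (y - t) * f (x - t) * \<pi> t) \<partial>lborel \<partial>lborel)"
      by (rule lborel_pair.Fubini[where f="\<lambda>(t,y). ennreal (f (y - t) * f (x - t) * \<pi> t)", simplified]) 
    also have "\<dots> = (\<integral>\<^sup>+t. (\<integral>\<^sup>+y. ennreal (f (y - t)) \<partial>lborel) * ennreal (f (x - t) * \<pi> t) \<partial>lborel)"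
      by (rule nn_integral_cong, subst nn_integral_multc[symmetric])
         (auto simp: ennreal_mult'' f0 pi0 mult.assoc)
    also have "\<dots> = ennreal (M x)" using T1 Mx by simp
    finally show ?thesis .
  qed
  have N2: "(\<integral>\<^sup>+y. \<integral>\<^sup>+t. ennreal (f (y - t) * f (x - t)) \<partial>lborel \<partial>lborel) = 1" for x
  proof -
    have "(\<integral>\<^sup>+y. \<integral>\<^sup>+t. ennreal (f (y - t) * f (x - t)) \<partial>lborel \<partial>lborel)
        = (\<integral>\<^sup>+t. \<integral>\<^sup>+y. ennreal (f (y - t) * f (x - t)) \<partial>lborel \<partial>lborel)"
      by (rule lborel_pair.Fubini[where f="\<lambda>(t,y). ennreal (f (y - t) * f (x - t))", simplified]) 
    also have "\<dots> = (\<integral>\<^sup>+t. (\<integral>\<^sup>+y. ennreal (f (y - t)) \<partial>lborel) * ennreal (f (x - t)) \<partial>lborel)"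
      by (rule nn_integral_cong, subst nn_integral_multc[symmetric])
         (auto simp: ennreal_mult'' f0 pi0 mult.assoc)
    also have "\<dots> = 1" using T1 T2 by simp
    finally show ?thesis .
  qed
  have part2: "(\<integral>y. bayes_pred f \<pi> y x * marginal f \<pi> y \<partial>lborel) = marginal f \<pi> x" for x
  proof -
    have "(\<integral>y. bayes_pred f \<pi> y x * marginal f \<pi> y \<partial>lborel)
        = (\<integral>y. (\<integral>t. f (y - t) * f (x - t) * \<pi> t \<partial>lborel) \<partial>lborel)"
    proof (rule Bochner_Integration.integral_cong[OF refl])
      fix y
      have "marginal f \<pi> y \<noteq> 0" using Mpos[of y] by (simp add: M_def)
      then show "bayes_pred f \<pi> y x * marginal f \<pi> y = (\<integral>t. f (y - t) * f (x - t) * \<pi> t \<partial>lborel)"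
        by (simp add: bayes_pred_def loc_dens_def mult_ac)
    qed
    also have "\<dots> = (\<integral>y. enn2real (\<integral>\<^sup>+t. ennreal (f (y - t) * f (x - t) * \<pi> t) \<partial>lborel) \<partial>lborel)"
      by (intro Bochner_Integration.integral_cong refl integral_eq_nn_integral) (auto simp: f0 pi0)
    also have "\<dots> = enn2real (\<integral>\<^sup>+y. ennreal (enn2real (\<integral>\<^sup>+t. ennreal (f (y - t) * f (x - t) * \<pi> t) \<partial>lborel)) \<partial>lborel)"
      by (rule integral_eq_nn_integral) auto
    also have "(\<integral>\<^sup>+y. ennreal (enn2real (\<integral>\<^sup>+t. ennreal (f (y - t) * f (x - t) * \<pi> t) \<partial>lborel)) \<partial>lborel)
        = (\<integral>\<^sup>+y. \<integral>\<^sup>+t. ennreal (f (y - t) * f (x - t) * \<pi> t) \<partial>lborel \<partial>lborel)"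
    proof (rule nn_integral_cong_AE)
      have "AE y in lborel. (\<integral>\<^sup>+t. ennreal (f (y - t) * f (x - t) * \<pi> t) \<partial>lborel) \<noteq> \<infinity>"
        by (rule nn_integral_PInf_AE) (measurable, simp add: N1)
      then show "AE y in lborel. ennreal (enn2real (\<integral>\<^sup>+t. ennreal (f (y - t) * f (x - t) * \<pi> t) \<partial>lborel))
          = (\<integral>\<^sup>+t. ennreal (f (y - t) * f (x - t) * \<pi> t) \<partial>lborel)"
        by eventually_elim (simp add: less_top[symmetric] ennreal_enn2real)
    qed
    also have "\<dots> = ennreal (M x)" by (rule N1)
    finally show ?thesis using Mpos[of x] by (simp add: M_def less_imp_le)
  qed
  let ?GU = "\<lambda>(x,y,z). ln (loc_dens f y z / unif_pred f x y) * loc_dens f y z * loc_dens f x z * \<pi> z"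
  let ?GB = "\<lambda>(x,y,z). ln (loc_dens f y z / bayes_pred f \<pi> x y) * loc_dens f y z * loc_dens f x z * \<pi> z"
  let ?D = "\<lambda>(x,y,z). ln (bayes_pred f \<pi> x y / unif_pred f x y) * loc_dens f y z * loc_dens f x z * \<pi> z"
  have IU: "integrable M3 ?GU" using assms(6) unfolding finite_bayes_risk_def .
  have IB: "integrable M3 ?GB" using assms(7) unfolding finite_bayes_risk_def .
  have brU: "bayes_risk f \<pi> (unif_pred f) = integral\<^sup>L M3 ?GU"
    using br_iter[of f \<pi> "unif_pred f"] M3_iter_zxy[OF IU] by simp
  have brB: "bayes_risk f \<pi> (bayes_pred f \<pi>) = integral\<^sup>L M3 ?GB"
    using br_iter[of f \<pi> "bayes_pred f \<pi>"] M3_iter_zxy[OF IB] by simp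
  define H where "H x y = (\<integral>t. f (y - t) * f (x - t) * \<pi> t \<partial>lborel)" for x y
  have Bdef: "bayes_pred f \<pi> x y = H x y / M x" for x y
    by (simp add: bayes_pred_def H_def M_def loc_dens_def)
  have Dm: "?D \<in> borel_measurable M3"
    unfolding bayes_pred_def unif_pred_def marginal_def loc_dens_def by measurable
  have ae1: "AE p in M3. (case p of (x,y,z) \<Rightarrow> f (y - z) * f (x - z) * \<pi> z) \<noteq> 0 \<longrightarrow>
      0 < (\<integral>z'. (case (fst p, fst (snd p), z') of (x,y,z) \<Rightarrow> f (y - z) * f (x - z) * \<pi> z) \<partial>lborel)"
    by (rule ae_pos) (auto simp: N1 f0 pi0 less_le)
  have ae2: "AE p in M3. (case p of (x,y,z) \<Rightarrow> f (y - z) * f (x - z) * \<pi> z) \<noteq> 0 \<longrightarrow>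
      0 < (\<integral>z'. (case (fst p, fst (snd p), z') of (x,y,z) \<Rightarrow> f (y - z) * f (x - z)) \<partial>lborel)"
    by (rule ae_pos) (auto simp: N2 f0 pi0 less_le)
  have ae: "AE p in M3. ?GU p - ?GB p = ?D p"
    using ae1 ae2
  proof eventually_elim
    case (elim p)
    obtain x y z where p: "p = (x,y,z)" by (cases p) auto
    show ?case
    proof (cases "f (y - z) * f (x - z) * \<pi> z = 0")
      case True
      then show ?thesis by (auto simp: p loc_dens_def)
    next
      case False
      have Hp: "0 < H x y" using elim False by (simp add: p H_def)
      have Up: "0 < unif_pred f x y" using elim False by (simp add: p unif_pred_def loc_dens_def)
      have Bp: "0 < bayes_pred f \<pi> x y" using Hp Mpos[of x] by (simp add: Bdef)
      have fp: "0 < f (y - z)" using False f0[of "y - z"] by (auto simp: less_le)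
      show ?thesis using Up Bp fp
        by (simp add: p loc_dens_def ln_div algebra_simps)
    qed
  qed
  have ID: "integrable M3 ?D"
    by (rule integrable_cong_AE_imp[OF Bochner_Integration.integrable_diff[OF IU IB] Dm ae])
  have "bayes_risk f \<pi> (unif_pred f) - bayes_risk f \<pi> (bayes_pred f \<pi>) = integral\<^sup>L M3 (\<lambda>p. ?GU p - ?GB p)"
    unfolding brU brB by (rule Bochner_Integration.integral_diff[OF IU IB, symmetric])
  also have "\<dots> = integral\<^sup>L M3 ?D"
    by (rule integral_cong_AE[OF borel_measurable_integrable[OF Bochner_Integration.integrable_diff[OF IU IB]] Dm ae])
  also have "\<dots> = (\<integral>x. \<integral>y. \<integral>z. ?D (x,y,z) \<partial>lborel \<partial>lborel \<partial>lborel)"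
    by (rule M3_triple[OF ID])
  also have "\<dots> = (\<integral>x. KL_div (bayes_pred f \<pi> x) (unif_pred f x) * marginal f \<pi> x \<partial>lborel)"
  proof (rule Bochner_Integration.integral_cong[OF refl])
    fix x
    have "(\<integral>y. \<integral>z. ?D (x,y,z) \<partial>lborel \<partial>lborel)
        = (\<integral>y. ln (bayes_pred f \<pi> x y / unif_pred f x y) * H x y \<partial>lborel)"
      by (rule Bochner_Integration.integral_cong[OF refl]) (simp add: H_def loc_dens_def mult.assoc)
    also have "\<dots> = (\<integral>y. ln (bayes_pred f \<pi> x y / unif_pred f x y) * H x y / M x \<partial>lborel) * M x"
      using Mpos[of x] by simp
    also have "\<dots> = KL_div (bayes_pred f \<pi> x) (unif_pred f x) * marginal f \<pi> x"
      by (simp add: KL_div_def Bdef M_def)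
    finally show "(\<integral>y. \<integral>z. ?D (x,y,z) \<partial>lborel \<partial>lborel) = KL_div (bayes_pred f \<pi> x) (unif_pred f x) * marginal f \<pi> x" .
  qed
  finally show ?thesis using part2 by blast
qed

end
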